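(* Let $P$ be an NL poset on $X_n$ whose twin classes $\alpha_1,\ldots,\alpha_r$ all have the same size $m\ge1$. Then $H=\mathrm{Aut}(P_\equiv)$, where $H=\{\psi\in\mathrm{Aut}(P_\equiv): |\psi(\alpha)|=|\alpha| \text{ for every twin class }\alpha\}$. Moreover, $\mathrm{Aut}(P)\cong\mathrm{Aut}(P_\equiv)$ if and only if $m=1$, i.e., every twin class is a singleton.
   Context: Let $X_n=\{0,1,\ldots,n-1\}$. A naturally labeled (NL) poset on $X_n$ is a partial order $\preceq$ on $X_n$ such that $x\preceq y$ implies $x\le y$ in the usual integer order. $\mathrm{Aut}(P)$ is the group of bijections $\sigma$ of $X_n$ with $x\preceq y\iff\sigma(x)\preceq\sigma(y)$. For $x\in X_n$, $D(x)=\{z: z\prec x\}$, $U(x)=\{z: x\prec z\}$; $x,y$ are twins if $D(x)=D(y)$ and $U(x)=U(y)$, and the equivalence classes are the twin classes. The twin poset $P_\equiv$ is the set of twin classes ordered by $\alpha\preceq_\equiv\beta$ iff $x\preceq y$ for (any) $x\in\alpha$, $y\in\beta$; $\mathrm{Aut}(P_\equiv)$ is its automorphism group. *)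

theory Defs
  imports "HOL-Algebra.Algebra"
begin

text \<open>A naturally labeled poset on X_n = {0..<n}, given by its (reflexive) order relation R.\<close>
definition nl_poset :: "nat \<Rightarrow> (nat \<Rightarrow> nat \<Rightarrow> bool) \<Rightarrow> bool" where
  "nl_poset n R \<longleftrightarrow>
     (\<forall>x y. R x y \<longrightarrow> x < n \<and> y < n) \<and>
     (\<forall>x<n. R x x) \<and>
     (\<forall>x y. R x y \<and> R y x \<longrightarrow> x = y) \<and>
     (\<forall>x y z. R x y \<and> R y z \<longrightarrow> R x z) \<and>
     (\<forall>x y. R x y \<longrightarrow> x \<le> y)"

definition down_set :: "nat \<Rightarrow> (nat \<Rightarrow> nat \<Rightarrow> bool) \<Rightarrow> nat \<Rightarrow> nat set" where
  "down_set n R x = {z \<in> {0..<n}. R z x \<and> z \<noteq> x}"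

definition up_set :: "nat \<Rightarrow> (nat \<Rightarrow> nat \<Rightarrow> bool) \<Rightarrow> nat \<Rightarrow> nat set" where
  "up_set n R x = {z \<in> {0..<n}. R x z \<and> z \<noteq> x}"

definition twins :: "nat \<Rightarrow> (nat \<Rightarrow> nat \<Rightarrow> bool) \<Rightarrow> nat \<Rightarrow> nat \<Rightarrow> bool" where
  "twins n R x y \<longleftrightarrow> down_set n R x = down_set n R y \<and> up_set n R x = up_set n R y"

definition twin_classes :: "nat \<Rightarrow> (nat \<Rightarrow> nat \<Rightarrow> bool) \<Rightarrow> nat set set" where
  "twin_classes n R = (\<lambda>x. {y \<in> {0..<n}. twins n R x y}) ` {0..<n}"

text \<open>Order of the twin poset: alpha below beta iff x below y for some (equivalently any) x in alpha, y in beta.\<close>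
definition twin_le :: "(nat \<Rightarrow> nat \<Rightarrow> bool) \<Rightarrow> nat set \<Rightarrow> nat set \<Rightarrow> bool" where
  "twin_le R \<alpha> \<beta> \<longleftrightarrow> (\<exists>x\<in>\<alpha>. \<exists>y\<in>\<beta>. R x y)"

definition aut_group :: "'a set \<Rightarrow> ('a \<Rightarrow> 'a \<Rightarrow> bool) \<Rightarrow> ('a \<Rightarrow> 'a) monoid" where
  "aut_group S R = (BijGroup S)\<lparr>carrier := {f \<in> Bij S. \<forall>x\<in>S. \<forall>y\<in>S. R x y \<longleftrightarrow> R (f x) (f y)}\<rparr>"

definition poset_aut_group :: "nat \<Rightarrow> (nat \<Rightarrow> nat \<Rightarrow> bool) \<Rightarrow> (nat \<Rightarrow> nat) monoid" where
  "poset_aut_group n R = aut_group {0..<n} R"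

definition twin_aut_group :: "nat \<Rightarrow> (nat \<Rightarrow> nat \<Rightarrow> bool) \<Rightarrow> (nat set \<Rightarrow> nat set) monoid" where
  "twin_aut_group n R = aut_group (twin_classes n R) (twin_le R)"

definition size_pres_auts :: "nat \<Rightarrow> (nat \<Rightarrow> nat \<Rightarrow> bool) \<Rightarrow> (nat set \<Rightarrow> nat set) set" where
  "size_pres_auts n R = {\<psi> \<in> carrier (twin_aut_group n R). \<forall>\<alpha>\<in>twin_classes n R. card (\<psi> \<alpha>) = card \<alpha>}"

end

theory Submission
  imports Defs
begin

lemma m_aut: "monoid.mult (aut_group S P) = monoid.mult (BijGroup S)"
  by (simp add: aut_group_def)
lemma m_bij: "f \<in> Bij S \<Longrightarrow> g \<in> Bij S \<Longrightarrow> f \<otimes>\<^bsub>BijGroup S\<^esub> g = compose S f g"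
  by (simp add: BijGroup_def)
lemma m_aut2: "f \<in> Bij S \<Longrightarrow> g \<in> Bij S \<Longrightarrow> f \<otimes>\<^bsub>aut_group S P\<^esub> g = compose S f g"
  by (simp add: m_aut m_bij)

lemma compose_image: "A \<subseteq> S \<Longrightarrow> compose S f g ` A = f ` g ` A"
proof -
  assume A: "A \<subseteq> S"
  have "compose S f g ` A = (f \<circ> g) ` A"
    by (rule image_cong) (use A in \<open>auto simp: compose_def\<close>)
  then show ?thesis by (simp add: image_comp)
qed

locale tw =
  fixes n :: nat and R :: "nat \<Rightarrow> nat \<Rightarrow> bool"
  assumes nl: "nl_poset n R"
begin

definition cls :: "nat \<Rightarrow> nat set" where
  "cls x = {y \<in> {0..<n}. twins n R x y}"

lemma classes_eq: "twin_classes n R = cls ` {0..<n}"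
  unfolding twin_classes_def cls_def by simp

lemma refl: "x < n \<Longrightarrow> R x x" using nl unfolding nl_poset_def by blast
lemma bnd: "R x y \<Longrightarrow> x < n \<and> y < n" using nl unfolding nl_poset_def by blast

lemma tw_refl: "twins n R x x" by (simp add: twins_def)
lemma tw_sym: "twins n R x y \<Longrightarrow> twins n R y x" by (simp add: twins_def)
lemma tw_trans: "twins n R x y \<Longrightarrow> twins n R y z \<Longrightarrow> twins n R x z" by (simp add: twins_def)

lemma cls_mem: "x < n \<Longrightarrow> x \<in> cls x" by (simp add: cls_def tw_refl)
lemma cls_sub: "cls x \<subseteq> {0..<n}" by (auto simp: cls_def)
lemma cls_eq_iff: "x < n \<Longrightarrow> y < n \<Longrightarrow> cls x = cls y \<longleftrightarrow> twins n R x y"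
proof
  assume xy: "x < n" "y < n" and e: "cls x = cls y"
  have "y \<in> cls y" using xy by (simp add: cls_def tw_refl)
  then have "y \<in> cls x" using e by simp
  then show "twins n R x y" by (simp add: cls_def)
next
  assume xy: "x < n" "y < n" and t: "twins n R x y"
  show "cls x = cls y"
    unfolding cls_def using t by (auto simp: twins_def)
qed
lemma in_cls: "y \<in> cls x \<longleftrightarrow> y < n \<and> twins n R x y" by (simp add: cls_def)
lemma in_cls_eq: "x < n \<Longrightarrow> y \<in> cls x \<Longrightarrow> cls y = cls x"
proof -
  assume "x < n" "y \<in> cls x"
  then have "y < n" "twins n R y x" using in_cls tw_sym by auto
  then show ?thesis using cls_eq_iff \<open>x < n\<close> by blast
qed

lemma tw_incomp: "twins n R x y \<Longrightarrow> x \<noteq> y \<Longrightarrow> R x y \<Longrightarrow> False"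
proof -
  assume a: "twins n R x y" "x \<noteq> y" "R x y"
  then have "x \<in> down_set n R y" using bnd unfolding down_set_def by auto
  then have "x \<in> down_set n R x" using a(1) unfolding twins_def by simp
  then show False unfolding down_set_def by simp
qed

lemma tw_repl1: "twins n R x x' \<Longrightarrow> \<not> twins n R x y \<Longrightarrow> R x y \<Longrightarrow> R x' y"
proof -
  assume a: "twins n R x x'" "\<not> twins n R x y" "R x y"
  then have "x \<noteq> y" using tw_refl by auto
  then have "y \<in> up_set n R x" using a bnd unfolding up_set_def by auto
  then have "y \<in> up_set n R x'" using a(1) unfolding twins_def by simp
  then show ?thesis unfolding up_set_def by simp
qed

lemma tw_repl2: "twins n R y y' \<Longrightarrow> \<not> twins n R x y \<Longrightarrow> R x y \<Longrightarrow> R x y'"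
proof -
  assume a: "twins n R y y'" "\<not> twins n R x y" "R x y"
  then have "x \<noteq> y" using tw_refl by auto
  then have "x \<in> down_set n R y" using a bnd unfolding down_set_def by auto
  then have "x \<in> down_set n R y'" using a(1) unfolding twins_def by simp
  then show ?thesis unfolding down_set_def by simp
qed

lemma tw_repl: "twins n R x x' \<Longrightarrow> twins n R y y' \<Longrightarrow> \<not> twins n R x y \<Longrightarrow> R x y \<Longrightarrow> R x' y'"
proof -
  assume a: "twins n R x x'" "twins n R y y'" "\<not> twins n R x y" "R x y"
  have "R x' y" using tw_repl1[OF a(1) a(3) a(4)] .
  moreover have "\<not> twins n R x' y" using a(1,3) tw_sym tw_trans by blast
  ultimately show ?thesis using tw_repl2[OF a(2)] by blast
qed

lemma twin_le_cls: "x < n \<Longrightarrow> y < n \<Longrightarrow> twin_le R (cls x) (cls y) \<longleftrightarrow> twins n R x y \<or> R x y"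
proof
  assume xy: "x < n" "y < n" and "twin_le R (cls x) (cls y)"
  then obtain x' y' where a: "x' \<in> cls x" "y' \<in> cls y" "R x' y'" unfolding twin_le_def by blast
  show "twins n R x y \<or> R x y"
  proof (cases "twins n R x y")
    case True then show ?thesis by simp
  next
    case False
    note nt = False
    have t1: "twins n R x' x" "twins n R y' y" using a in_cls tw_sym by auto
    have "\<not> twins n R x' y'"
    proof
      assume "twins n R x' y'"
      then have "twins n R x y" using t1 tw_sym tw_trans by blast
      then show False using nt by simp
    qed
    then show ?thesis using tw_repl[OF t1 _ a(3)] by simp
  qed
next
  assume xy: "x < n" "y < n" and d: "twins n R x y \<or> R x y"
  show "twin_le R (cls x) (cls y)"
    using d
  proof (elim disjE)
    assume "twins n R x y"
    then have "cls y = cls x" using cls_eq_iff xy tw_sym by metis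
    then show ?thesis using cls_mem[OF xy(1)] refl[OF xy(1)] unfolding twin_le_def by auto
  next
    assume "R x y"
    then show ?thesis using cls_mem xy unfolding twin_le_def by blast
  qed
qed

abbreviation "Aut \<equiv> carrier (poset_aut_group n R)"
abbreviation "AutW \<equiv> carrier (twin_aut_group n R)"
abbreviation "CL \<equiv> twin_classes n R"

lemma Aut_def': "f \<in> Aut \<longleftrightarrow> f \<in> extensional {0..<n} \<and> bij_betw f {0..<n} {0..<n} \<and>
   (\<forall>x\<in>{0..<n}. \<forall>y\<in>{0..<n}. R x y \<longleftrightarrow> R (f x) (f y))"
  by (simp add: poset_aut_group_def aut_group_def BijGroup_def Bij_def)

lemma AutW_def': "g \<in> AutW \<longleftrightarrow> g \<in> extensional CL \<and> bij_betw g CL CL \<and>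
   (\<forall>x\<in>CL. \<forall>y\<in>CL. twin_le R x y \<longleftrightarrow> twin_le R (g x) (g y))"
  by (simp add: twin_aut_group_def aut_group_def BijGroup_def Bij_def)

lemma aut_bij: "f \<in> Aut \<Longrightarrow> bij_betw f {0..<n} {0..<n}"
  using Aut_def' by blast
lemma aut_ext: "f \<in> Aut \<Longrightarrow> f \<in> extensional {0..<n}"
  using Aut_def' by blast
lemma aut_R: "f \<in> Aut \<Longrightarrow> x < n \<Longrightarrow> y < n \<Longrightarrow> R x y \<longleftrightarrow> R (f x) (f y)"
proof -
  assume "f \<in> Aut" "x < n" "y < n"
  then have "\<forall>x\<in>{0..<n}. \<forall>y\<in>{0..<n}. R x y \<longleftrightarrow> R (f x) (f y)" using Aut_def' by blast
  moreover have "x \<in> {0..<n}" "y \<in> {0..<n}" using \<open>x < n\<close> \<open>y < n\<close> by auto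
  ultimately show ?thesis by blast
qed

lemma autw_bij: "f \<in> AutW \<Longrightarrow> bij_betw f CL CL"
  using AutW_def' by blast
lemma autw_ext: "f \<in> AutW \<Longrightarrow> f \<in> extensional CL"
  using AutW_def' by blast
lemma autw_R: "f \<in> AutW \<Longrightarrow> a \<in> CL \<Longrightarrow> b \<in> CL \<Longrightarrow> twin_le R a b \<longleftrightarrow> twin_le R (f a) (f b)"
proof -
  assume "f \<in> AutW" "a \<in> CL" "b \<in> CL"
  then have "\<forall>x\<in>CL. \<forall>y\<in>CL. twin_le R x y \<longleftrightarrow> twin_le R (f x) (f y)" using AutW_def' by blast
  then show ?thesis using \<open>a \<in> CL\<close> \<open>b \<in> CL\<close> by blast
qed

lemma aut_down:
  assumes f: "f \<in> Aut" and x: "x < n"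
  shows "down_set n R (f x) = f ` down_set n R x"
proof
  have b: "bij_betw f {0..<n} {0..<n}" using aut_bij f by blast
  have bi: "inj_on f {0..<n}" and bs: "f ` {0..<n} = {0..<n}" using b unfolding bij_betw_def by auto
  note p = aut_R[OF f]
  show "f ` down_set n R x \<subseteq> down_set n R (f x)"
  proof
    fix w assume "w \<in> f ` down_set n R x"
    then obtain z where z: "z < n" "R z x" "z \<noteq> x" "w = f z" unfolding down_set_def by auto
    have "f z \<in> f ` {0..<n}" using z(1) by simp
    then have "f z < n" using bs by simp
    moreover have "R (f z) (f x)" using p[OF z(1) x] z(2) by blast
    moreover have "f z \<noteq> f x" using z x inj_onD[OF bi] by (metis atLeastLessThan_iff zero_le)
    ultimately show "w \<in> down_set n R (f x)" using z(4) unfolding down_set_def by auto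
  qed
  show "down_set n R (f x) \<subseteq> f ` down_set n R x"
  proof
    fix w assume w: "w \<in> down_set n R (f x)"
    then have "w \<in> f ` {0..<n}" using bs unfolding down_set_def by auto
    then obtain z where z: "z < n" "w = f z" by auto
    have "R (f z) (f x)" using z w unfolding down_set_def by auto
    then have "R z x" using p[OF z(1) x] by blast
    moreover have "z \<noteq> x" using w z unfolding down_set_def by auto
    ultimately show "w \<in> f ` down_set n R x" using z unfolding down_set_def by auto
  qed
qed

lemma aut_up:
  assumes f: "f \<in> Aut" and x: "x < n"
  shows "up_set n R (f x) = f ` up_set n R x"
proof
  have b: "bij_betw f {0..<n} {0..<n}" using aut_bij f by blast
  have bi: "inj_on f {0..<n}" and bs: "f ` {0..<n} = {0..<n}" using b unfolding bij_betw_def by auto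
  note p = aut_R[OF f]
  show "f ` up_set n R x \<subseteq> up_set n R (f x)"
  proof
    fix w assume "w \<in> f ` up_set n R x"
    then obtain z where z: "z < n" "R x z" "z \<noteq> x" "w = f z" unfolding up_set_def by auto
    have "f z \<in> f ` {0..<n}" using z(1) by simp
    then have "f z < n" using bs by simp
    moreover have "R (f x) (f z)" using p[OF x z(1)] z(2) by blast
    moreover have "f z \<noteq> f x" using z x inj_onD[OF bi] by (metis atLeastLessThan_iff zero_le)
    ultimately show "w \<in> up_set n R (f x)" using z(4) unfolding up_set_def by auto
  qed
  show "up_set n R (f x) \<subseteq> f ` up_set n R x"
  proof
    fix w assume w: "w \<in> up_set n R (f x)"
    then have "w \<in> f ` {0..<n}" using bs unfolding up_set_def by auto
    then obtain z where z: "z < n" "w = f z" by auto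
    have "R (f x) (f z)" using z w unfolding up_set_def by auto
    then have "R x z" using p[OF x z(1)] by blast
    moreover have "z \<noteq> x" using w z unfolding up_set_def by auto
    ultimately show "w \<in> f ` up_set n R x" using z unfolding up_set_def by auto
  qed
qed

lemma aut_twins:
  assumes f: "f \<in> Aut" and x: "x < n" and y: "y < n"
  shows "twins n R (f x) (f y) \<longleftrightarrow> twins n R x y"
proof -
  have i: "inj_on f {0..<n}" using aut_bij[OF f] bij_betw_def by blast
  have s: "down_set n R z \<subseteq> {0..<n}" "up_set n R z \<subseteq> {0..<n}" for z
    unfolding down_set_def up_set_def by auto
  show ?thesis unfolding twins_def
    using aut_down[OF f x] aut_down[OF f y] aut_up[OF f x] aut_up[OF f y]
      inj_on_image_eq_iff[OF i s(1) s(1)] inj_on_image_eq_iff[OF i s(2) s(2)] by simp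
qed

lemma aut_lt: "f \<in> Aut \<Longrightarrow> x < n \<Longrightarrow> f x < n"
proof -
  assume f: "f \<in> Aut" and x: "x < n"
  have "f ` {0..<n} = {0..<n}" using aut_bij[OF f] unfolding bij_betw_def by blast
  moreover have "f x \<in> f ` {0..<n}" using x by simp
  ultimately show ?thesis by simp
qed

lemma aut_cls:
  assumes f: "f \<in> Aut" and x: "x < n"
  shows "f ` cls x = cls (f x)"
proof
  show "f ` cls x \<subseteq> cls (f x)"
    using aut_twins[OF f x] aut_lt[OF f] unfolding cls_def by auto
  show "cls (f x) \<subseteq> f ` cls x"
  proof
    fix w assume w: "w \<in> cls (f x)"
    then have "w \<in> f ` {0..<n}" using aut_bij[OF f] unfolding bij_betw_def cls_def by auto
    then obtain z where z: "z < n" "w = f z" by auto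
    then have "twins n R x z" using aut_twins[OF f x z(1)] w unfolding cls_def by auto
    then show "w \<in> f ` cls x" using z unfolding cls_def by auto
  qed
qed

definition pi :: "(nat \<Rightarrow> nat) \<Rightarrow> nat set \<Rightarrow> nat set" where
  "pi f = (\<lambda>\<alpha>\<in>CL. f ` \<alpha>)"

lemma pi_cls: "x < n \<Longrightarrow> pi f (cls x) = f ` cls x"
  unfolding pi_def classes_eq by auto

lemma pi_in: assumes f: "f \<in> Aut" shows "pi f \<in> AutW"
proof -
  have e: "pi f \<in> extensional CL" unfolding pi_def by simp
  have pc: "pi f (cls x) = cls (f x)" if "x < n" for x
    using pi_cls aut_cls f that by simp
  have inj: "inj_on (pi f) CL"
  proof (rule inj_onI)
    fix a b assume a: "a \<in> CL" and b: "b \<in> CL" and e: "pi f a = pi f b"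
    obtain x y where xy: "x < n" "y < n" "a = cls x" "b = cls y" using a b classes_eq by auto
    then have "cls (f x) = cls (f y)" using e pc by simp
    then have "twins n R (f x) (f y)" using cls_eq_iff aut_lt f xy by simp
    then have "twins n R x y" using aut_twins f xy by simp
    then show "a = b" using cls_eq_iff xy by simp
  qed
  have im: "pi f ` CL = CL"
  proof
    show "pi f ` CL \<subseteq> CL" using pc aut_lt[OF f] classes_eq by auto
    show "CL \<subseteq> pi f ` CL"
    proof
      fix a assume "a \<in> CL"
      then obtain z where z: "z < n" "a = cls z" using classes_eq by auto
      then have "z \<in> f ` {0..<n}" using aut_bij[OF f] unfolding bij_betw_def by auto
      then obtain w where w: "w < n" "z = f w" by auto
      then have "cls w \<in> CL" "pi f (cls w) = a" using z pc classes_eq by auto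
      then show "a \<in> pi f ` CL" by (metis rev_image_eqI)
    qed
  qed
  have le: "\<forall>a\<in>CL. \<forall>b\<in>CL. twin_le R a b \<longleftrightarrow> twin_le R (pi f a) (pi f b)"
  proof (intro ballI)
    fix a b assume a: "a \<in> CL" and b: "b \<in> CL"
    obtain x y where xy: "x < n" "y < n" "a = cls x" "b = cls y" using a b classes_eq by auto
    have "twin_le R (pi f a) (pi f b) \<longleftrightarrow> twins n R (f x) (f y) \<or> R (f x) (f y)"
      using xy pc twin_le_cls aut_lt f by simp
    also have "\<dots> \<longleftrightarrow> twins n R x y \<or> R x y"
      using aut_twins[OF f xy(1,2)] aut_R[OF f xy(1,2)] by simp
    also have "\<dots> \<longleftrightarrow> twin_le R a b" using twin_le_cls xy by simp
    finally show "twin_le R a b \<longleftrightarrow> twin_le R (pi f a) (pi f b)" by simp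
  qed
  have b: "bij_betw (pi f) CL CL" unfolding bij_betw_def using inj im by blast
  have "pi f \<in> extensional CL \<and> bij_betw (pi f) CL CL \<and>
   (\<forall>x\<in>CL. \<forall>y\<in>CL. twin_le R x y \<longleftrightarrow> twin_le R (pi f x) (pi f y))"
    using e b le by blast
  then show ?thesis by (rule AutW_def'[THEN iffD2])
qed

lemma pi_hom: "pi \<in> hom (poset_aut_group n R) (twin_aut_group n R)"
proof -
  have "pi (f \<otimes>\<^bsub>poset_aut_group n R\<^esub> g) = pi f \<otimes>\<^bsub>twin_aut_group n R\<^esub> pi g"
    if f: "f \<in> Aut" and g: "g \<in> Aut" for f g
  proof -
    have fB: "f \<in> Bij {0..<n}" "g \<in> Bij {0..<n}" using f g aut_bij aut_ext unfolding Bij_def by auto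
    have pB: "pi f \<in> Bij CL" "pi g \<in> Bij CL" using pi_in[OF f] pi_in[OF g] autw_bij autw_ext unfolding Bij_def by auto
    have m1: "f \<otimes>\<^bsub>poset_aut_group n R\<^esub> g = compose {0..<n} f g"
      unfolding poset_aut_group_def using m_aut2[OF fB] .
    have m2: "pi f \<otimes>\<^bsub>twin_aut_group n R\<^esub> pi g = compose CL (pi f) (pi g)"
      unfolding twin_aut_group_def using m_aut2[OF pB] .
    show ?thesis unfolding m1 m2
    proof (rule extensionalityI[where A=CL])
      show "pi (compose {0..<n} f g) \<in> extensional CL" unfolding pi_def by simp
      show "compose CL (pi f) (pi g) \<in> extensional CL" by (simp add: compose_def)
      fix a assume a: "a \<in> CL"
      then obtain x where x: "x < n" "a = cls x" using classes_eq by auto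
      have "pi g a = cls (g x)" using x pi_cls aut_cls g by simp
      moreover have "g x < n" using aut_lt g x by simp
      ultimately have "pi f (pi g a) = f ` g ` a" using pi_cls x aut_cls g by simp
      moreover have "pi (compose {0..<n} f g) a = f ` g ` a"
        using a compose_image[OF cls_sub[of x]] x unfolding pi_def by simp
      ultimately show "pi (compose {0..<n} f g) a = compose CL (pi f) (pi g) a"
        using a by (simp add: compose_def)
    qed
  qed
  note hm = this
  have p: "pi \<in> Aut \<rightarrow> AutW" using pi_in by (rule Pi_I)
  show ?thesis unfolding hom_def
  proof (rule CollectI, rule conjI)
    show "pi \<in> Aut \<rightarrow> AutW" by (rule p)
    show "\<forall>x\<in>Aut. \<forall>y\<in>Aut. pi (x \<otimes>\<^bsub>poset_aut_group n R\<^esub> y) = pi x \<otimes>\<^bsub>twin_aut_group n R\<^esub> pi y"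
      using hm by blast
  qed
qed

lemma R_twins: "x < n \<Longrightarrow> y < n \<Longrightarrow> twins n R x y \<Longrightarrow> R x y \<longleftrightarrow> x = y"
  using tw_incomp refl by blast

lemma Aut_intro:
  assumes e: "g \<in> extensional {0..<n}" and i: "inj_on g {0..<n}"
    and lt: "\<And>x. x < n \<Longrightarrow> g x < n"
    and r: "\<And>x y. x < n \<Longrightarrow> y < n \<Longrightarrow> R x y \<longleftrightarrow> R (g x) (g y)"
  shows "g \<in> Aut"
proof -
  have "g ` {0..<n} \<subseteq> {0..<n}" using lt by auto
  then have "g ` {0..<n} = {0..<n}" using endo_inj_surj[OF _ _ i] by simp
  then have b: "bij_betw g {0..<n} {0..<n}" using i unfolding bij_betw_def by blast
  have "\<forall>x\<in>{0..<n}. \<forall>y\<in>{0..<n}. R x y \<longleftrightarrow> R (g x) (g y)" using r by simp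
  then show ?thesis using e b Aut_def' by blast
qed

lemma twin_perm:
  assumes e: "g \<in> extensional {0..<n}" and i: "inj_on g {0..<n}"
    and lt: "\<And>x. x < n \<Longrightarrow> g x < n" and t: "\<And>x. x < n \<Longrightarrow> twins n R x (g x)"
  shows "g \<in> Aut"
proof (rule Aut_intro[OF e i lt])
  fix x y assume x: "x < n" and y: "y < n"
  have gx: "g x < n" "g y < n" using lt x y by auto
  show "R x y \<longleftrightarrow> R (g x) (g y)"
  proof (cases "twins n R x y")
    case True
    then have "twins n R (g x) (g y)" using t x y tw_sym tw_trans by metis
    then have "R (g x) (g y) \<longleftrightarrow> g x = g y" using R_twins gx by blast
    moreover have "R x y \<longleftrightarrow> x = y" using R_twins x y True by blast
    moreover have "g x = g y \<longleftrightarrow> x = y" using i x y inj_on_eq_iff by fastforce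
    ultimately show ?thesis by simp
  next
    case False
    have t1: "twins n R x (g x)" "twins n R y (g y)" using t x y by auto
    have "\<not> twins n R (g x) (g y)" using False t1 tw_sym tw_trans by metis
    moreover have "twins n R (g x) x" "twins n R (g y) y" using t1 tw_sym by auto
    ultimately show ?thesis using tw_repl[OF t1 False] tw_repl[of "g x" x "g y" y] by blast
  qed
qed

lemma pi_surj:
  assumes cm: "\<forall>\<alpha>\<in>CL. card \<alpha> = m" and psi: "\<psi> \<in> AutW"
  shows "\<exists>g\<in>Aut. pi g = \<psi>"
proof -
  have pb: "bij_betw \<psi> CL CL" using autw_bij[OF psi] .
  have pcl: "\<exists>z<n. \<psi> (cls x) = cls z" if "x < n" for x
  proof -
    have "cls x \<in> CL" using that classes_eq by auto
    then have "\<psi> (cls x) \<in> CL" using pb bij_betwE by blast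
    then show ?thesis using classes_eq by auto
  qed
  define hb where "hb = (\<lambda>A B. SOME h::nat\<Rightarrow>nat. bij_betw h A B)"
  have hbb: "bij_betw (hb (cls x) (\<psi> (cls x))) (cls x) (\<psi> (cls x))" if x: "x < n" for x
  proof -
    obtain z where z: "z < n" "\<psi> (cls x) = cls z" using pcl x by blast
    have f1: "finite (cls x)" "finite (cls z)" using cls_sub finite_subset by blast+
    have "cls x \<in> CL" "cls z \<in> CL" using x z classes_eq by auto
    then have "card (cls x) = card (cls z)" using cm by simp
    then have "\<exists>h. bij_betw h (cls x) (cls z)" using finite_same_card_bij f1 by blast
    then show ?thesis unfolding hb_def z(2) by (rule someI_ex)
  qed
  define g where "g = (\<lambda>x\<in>{0..<n}. hb (cls x) (\<psi> (cls x)) x)"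
  have gx: "g x \<in> \<psi> (cls x)" if x: "x < n" for x
  proof -
    have "hb (cls x) (\<psi> (cls x)) x \<in> \<psi> (cls x)" using bij_betwE[OF hbb[OF x]] cls_mem[OF x] by blast
    then show ?thesis using x unfolding g_def by simp
  qed
  have gcls: "cls (g x) = \<psi> (cls x) \<and> g x < n" if x: "x < n" for x
  proof -
    obtain z where z: "z < n" "\<psi> (cls x) = cls z" using pcl x by blast
    then have "g x \<in> cls z" using gx[OF x] by simp
    then have "cls (g x) = cls z" "g x < n" using in_cls_eq[OF z(1)] in_cls by blast+
    then show ?thesis using z(2) by simp
  qed
  have pinj: "inj_on \<psi> CL" by (rule bij_betw_imp_inj_on[OF pb])
  have ginj: "inj_on g {0..<n}"
  proof (rule inj_onI)
    fix x y assume x: "x \<in> {0..<n}" and y: "y \<in> {0..<n}" and e: "g x = g y"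
    have xn: "x < n" "y < n" using x y by auto
    have "\<psi> (cls x) = \<psi> (cls y)" using gcls[OF xn(1)] gcls[OF xn(2)] e by simp
    moreover have "cls x \<in> CL" "cls y \<in> CL" using x y classes_eq by auto
    ultimately have c: "cls x = cls y" using inj_onD[OF pinj] by blast
    have "y \<in> cls x" using c cls_mem y by simp
    moreover have "x \<in> cls x" using cls_mem x by simp
    moreover have "hb (cls x) (\<psi> (cls x)) x = hb (cls x) (\<psi> (cls x)) y"
      using e x y c unfolding g_def by simp
    ultimately show "x = y" using inj_onD[OF bij_betw_imp_inj_on[OF hbb[OF xn(1)]]] by blast
  qed
  have gA: "g \<in> Aut"
  proof (rule Aut_intro)
    show "g \<in> extensional {0..<n}" unfolding g_def by simp
    show "inj_on g {0..<n}" by (rule ginj)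
    show "g x < n" if "x < n" for x using gcls that by blast
    fix x y assume x: "x < n" and y: "y < n"
    have gxy: "g x < n" "g y < n" using gcls x y by auto
    show "R x y \<longleftrightarrow> R (g x) (g y)"
    proof (cases "twins n R x y")
      case True
      then have "cls x = cls y" using cls_eq_iff x y by simp
      then have "cls (g x) = cls (g y)" using gcls x y by simp
      then have "twins n R (g x) (g y)" using cls_eq_iff gxy by simp
      then have "R (g x) (g y) \<longleftrightarrow> g x = g y" using R_twins gxy by blast
      moreover have "R x y \<longleftrightarrow> x = y" using R_twins x y True by blast
      moreover have "g x = g y \<longleftrightarrow> x = y" using inj_on_eq_iff[OF ginj, of x y] x y by simp
      ultimately show ?thesis by simp
    next
      case False
      then have "cls x \<noteq> cls y" using cls_eq_iff x y by simp
      moreover have cxy: "cls x \<in> CL" "cls y \<in> CL" using x y classes_eq by auto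
      ultimately have "\<psi> (cls x) \<noteq> \<psi> (cls y)" using inj_onD[OF pinj _ cxy] by blast
      then have "cls (g x) \<noteq> cls (g y)" using gcls x y by simp
      then have nt: "\<not> twins n R (g x) (g y)" using cls_eq_iff gxy by simp
      have "R x y \<longleftrightarrow> twin_le R (cls x) (cls y)" using twin_le_cls x y False by simp
      also have "\<dots> \<longleftrightarrow> twin_le R (\<psi> (cls x)) (\<psi> (cls y))" using autw_R[OF psi cxy] .
      also have "\<dots> \<longleftrightarrow> twin_le R (cls (g x)) (cls (g y))" using gcls x y by simp
      also have "\<dots> \<longleftrightarrow> R (g x) (g y)" using twin_le_cls gxy nt by simp
      finally show ?thesis .
    qed
  qed
  have "pi g = \<psi>"
  proof (rule extensionalityI[where A=CL])
    show "pi g \<in> extensional CL" unfolding pi_def by simp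
    show "\<psi> \<in> extensional CL" using autw_ext[OF psi] .
    fix a assume "a \<in> CL"
    then obtain x where x: "x < n" "a = cls x" using classes_eq by auto
    have "g ` cls x = hb (cls x) (\<psi> (cls x)) ` cls x"
    proof (rule image_cong)
      fix y assume y: "y \<in> cls x"
      then have "y < n" "cls y = cls x" using in_cls in_cls_eq[OF x(1)] by auto
      then show "g y = hb (cls x) (\<psi> (cls x)) y" unfolding g_def by simp
    qed simp
    also have "\<dots> = \<psi> (cls x)" by (rule bij_betw_imp_surj_on[OF hbb[OF x(1)]])
    finally have "g ` cls x = \<psi> (cls x)" .
    then show "pi g a = \<psi> a" using pi_cls[OF x(1), of g] x(2) by simp
  qed
  then show ?thesis using gA by blast
qed

lemma finite_Aut: "finite Aut"
proof -
  have "Aut \<subseteq> {0..<n} \<rightarrow>\<^sub>E {0..<n}"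
  proof
    fix f assume f: "f \<in> Aut"
    show "f \<in> {0..<n} \<rightarrow>\<^sub>E {0..<n}" using aut_ext[OF f] aut_lt[OF f] by (auto simp: PiE_iff)
  qed
  moreover have "finite ({0..<n} \<rightarrow>\<^sub>E {0..<n})" by (rule finite_PiE) auto
  ultimately show ?thesis using finite_subset by blast
qed

end

theorem proposition4p9:
  fixes n m :: nat and R :: "nat \<Rightarrow> nat \<Rightarrow> bool"
  assumes "nl_poset n R"
    and "n \<ge> 1"
    and "m \<ge> 1"
    and "\<forall>\<alpha>\<in>twin_classes n R. card \<alpha> = m"
  shows "size_pres_auts n R = carrier (twin_aut_group n R) \<and>
         (poset_aut_group n R \<cong> twin_aut_group n R \<longleftrightarrow> m = 1)"
proof -
  interpret tw n R by (rule tw.intro) (rule assms(1))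
  note cm = assms(4)
  have part1: "size_pres_auts n R = carrier (twin_aut_group n R)"
  proof
    show "size_pres_auts n R \<subseteq> AutW" unfolding size_pres_auts_def by blast
    show "AutW \<subseteq> size_pres_auts n R"
    proof
      fix \<psi> assume psi: "\<psi> \<in> AutW"
      have "\<forall>\<alpha>\<in>CL. card (\<psi> \<alpha>) = card \<alpha>"
      proof
        fix \<alpha> assume a: "\<alpha> \<in> CL"
        then have "\<psi> \<alpha> \<in> CL" using bij_betwE[OF autw_bij[OF psi]] by blast
        then show "card (\<psi> \<alpha>) = card \<alpha>" using a cm by simp
      qed
      then show "\<psi> \<in> size_pres_auts n R" using psi unfolding size_pres_auts_def by blast
    qed
  qed
  have surj: "pi ` Aut = AutW"
  proof
    show "pi ` Aut \<subseteq> AutW" using pi_in by blast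
    show "AutW \<subseteq> pi ` Aut"
    proof
      fix \<psi> assume "\<psi> \<in> AutW"
      then obtain g where "g \<in> Aut" "pi g = \<psi>" using pi_surj[OF cm] by blast
      then show "\<psi> \<in> pi ` Aut" by blast
    qed
  qed
  have part2: "poset_aut_group n R \<cong> twin_aut_group n R \<longleftrightarrow> m = 1"
  proof
    assume iso: "poset_aut_group n R \<cong> twin_aut_group n R"
    show "m = 1"
    proof (rule ccontr)
      assume "m \<noteq> 1"
      then have m2: "m \<ge> 2" using assms(3) by simp
      from iso obtain h where "h \<in> iso (poset_aut_group n R) (twin_aut_group n R)"
        unfolding is_iso_def by blast
      then have "bij_betw h Aut AutW" unfolding iso_def by blast
      then have ceq: "card Aut = card AutW" by (rule bij_betw_same_card)
      have n0: "0 < n" using assms(2) by simp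
      have "cls 0 \<in> CL" using n0 classes_eq by auto
      then have "card (cls 0) \<ge> 2" using cm m2 by simp
      moreover have "finite (cls 0)" using cls_sub finite_subset by blast
      ultimately have "\<not> cls 0 \<subseteq> {0}"
      proof (intro notI)
        assume "cls 0 \<subseteq> {0}"
        then have "card (cls 0) \<le> card {0::nat}" by (intro card_mono) auto
        then show False using \<open>card (cls 0) \<ge> 2\<close> by simp
      qed
      then obtain b where b: "b \<in> cls 0" "b \<noteq> 0" by blast
      have bn: "b < n" "twins n R 0 b" using b in_cls by auto
      define sw where "sw = (\<lambda>x\<in>{0..<n}. if x = 0 then b else if x = b then 0 else x)"
      define idn where "idn = (\<lambda>x\<in>{0..<n}. x)"
      have swA: "sw \<in> Aut"
      proof (rule twin_perm)
        show "sw \<in> extensional {0..<n}" unfolding sw_def by simp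
        show "inj_on sw {0..<n}" unfolding sw_def inj_on_def by auto
        show "sw x < n" if "x < n" for x using that bn n0 unfolding sw_def by auto
        show "twins n R x (sw x)" if "x < n" for x
          using that bn tw_refl tw_sym unfolding sw_def by auto
      qed
      have idA: "idn \<in> Aut"
      proof (rule twin_perm)
        show "idn \<in> extensional {0..<n}" unfolding idn_def by simp
        show "inj_on idn {0..<n}" unfolding idn_def inj_on_def by auto
        show "idn x < n" if "x < n" for x using that unfolding idn_def by auto
        show "twins n R x (idn x)" if "x < n" for x
          using that tw_refl unfolding idn_def by auto
      qed
      have "pi sw = pi idn"
      proof (rule extensionalityI[where A=CL])
        show "pi sw \<in> extensional CL" "pi idn \<in> extensional CL" unfolding pi_def by simp_all
        fix a assume "a \<in> CL"
        then obtain x where x: "x < n" "a = cls x" using classes_eq by auto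
        have t1: "twins n R x (sw x)" using x bn tw_refl tw_sym unfolding sw_def by auto
        have t2: "twins n R x (idn x)" using x tw_refl unfolding idn_def by auto
        have "pi sw a = cls (sw x)" using pi_cls[OF x(1)] aut_cls[OF swA x(1)] x(2) by simp
        also have "\<dots> = cls x" using cls_eq_iff[OF aut_lt[OF swA x(1)] x(1)] t1 tw_sym by blast
        also have "\<dots> = cls (idn x)" using cls_eq_iff[OF x(1) aut_lt[OF idA x(1)]] t2 by blast
        also have "\<dots> = pi idn a" using pi_cls[OF x(1)] aut_cls[OF idA x(1)] x(2) by simp
        finally show "pi sw a = pi idn a" .
      qed
      moreover have "sw \<noteq> idn"
      proof
        assume "sw = idn"
        then have "sw 0 = idn 0" by simp
        then show False using n0 b(2) unfolding sw_def idn_def by simp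
      qed
      ultimately have "\<not> inj_on pi Aut" using inj_onD[OF _ _ swA idA] by blast
      then have "card (pi ` Aut) \<noteq> card Aut" using inj_on_iff_eq_card[OF finite_Aut] by blast
      moreover have "card (pi ` Aut) \<le> card Aut" using card_image_le[OF finite_Aut] .
      ultimately have "card AutW < card Aut" using surj by simp
      then show False using ceq by simp
    qed
  next
    assume m1: "m = 1"
    have single: "cls x = {x}" if x: "x < n" for x
    proof -
      have "cls x \<in> CL" using x classes_eq by auto
      then have "card (cls x) = 1" using cm m1 by simp
      then obtain y where "cls x = {y}" using card_1_singletonE by blast
      then show ?thesis using cls_mem[OF x] by simp
    qed
    have inj: "inj_on pi Aut"
    proof (rule inj_onI)
      fix f g assume f: "f \<in> Aut" and g: "g \<in> Aut" and e: "pi f = pi g"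
      show "f = g"
      proof (rule extensionalityI[where A="{0..<n}"])
        show "f \<in> extensional {0..<n}" using aut_ext[OF f] .
        show "g \<in> extensional {0..<n}" using aut_ext[OF g] .
        fix x assume "x \<in> {0..<n}"
        then have x: "x < n" by simp
        have "pi f (cls x) = pi g (cls x)" using e by simp
        then have "f ` {x} = g ` {x}" using pi_cls[OF x] single[OF x] by simp
        then show "f x = g x" by simp
      qed
    qed
    have "pi \<in> iso (poset_aut_group n R) (twin_aut_group n R)"
      unfolding iso_def bij_betw_def using pi_hom inj surj by blast
    then show "poset_aut_group n R \<cong> twin_aut_group n R" by (rule is_isoI)
  qed
  show ?thesis using part1 part2 by blast
qed

end
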